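(* Let $p\in[2,\infty]$ with conjugate exponent $p^*$ (so $1/p+1/p^*=1$, $p^*=1$ if $p=\infty$), and let $m\geq 2$ be an integer. Then for every continuous $m$-linear form $T:X_p\times c_0\times\cdots\times c_0\to\mathbb{C}$, $$\Big(\sum_{i_1=1}^\infty\Big(\sum_{i_2,\ldots,i_m=1}^\infty|T(e_{i_1},\ldots,e_{i_m})|^2\Big)^{p^*/2}\Big)^{1/p^*}\le (S_{m-1,p^*})^{-1}\|T\|;$$ that is, the optimal constant $C^{id,(p,\infty,\ldots,\infty)\mathbb{C}}_{(p^*,2,\ldots,2)}$ in this inequality satisfies $C^{id,(p,\infty,\ldots,\infty)\mathbb{C}}_{(p^*,2,\ldots,2)}\le(S_{m-1,p^*})^{-1}$.
   Context: $X_p=\ell_p(\mathbb{C})$ for $p<\infty$ and $X_\infty=c_0(\mathbb{C})$; $(e_k)$ are the canonical unit vectors; $\|T\|=\sup\{|T(x^{(1)},\ldots,x^{(m)})|:\|x^{(i)}\|\le1\}$. $S_{k,q}$ ($k\ge1$, $0<q<\infty$) denotes the largest constant $S$ such that for all $N$ and all complex arrays $(a_{i_1\ldots i_k})_{i_1,\ldots,i_k=1}^N$, $S(\sum|a_{i_1\ldots i_k}|^2)^{1/2}\le(\mathbb{E}|\sum a_{i_1\ldots i_k}\varepsilon^{(1)}_{i_1}\cdots\varepsilon^{(k)}_{i_k}|^q)^{1/q}$, where $\varepsilon^{(j)}_n$ are independent Steinhaus variables (uniformly distributed on the unit circle). *)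

theory Defs
  imports "HOL-Analysis.Analysis"
begin

text \<open>Sequences are functions nat => complex, indexed from 0.
  The exponent p is an extended real; p = infinity means c_0.\<close>

definition seq_space :: "ereal \<Rightarrow> (nat \<Rightarrow> complex) set" where
  "seq_space p = (if p = \<infinity> then {x. x \<longlonglongrightarrow> 0}
                   else {x. summable (\<lambda>n. norm (x n) powr real_of_ereal p)})"

definition seq_norm :: "ereal \<Rightarrow> (nat \<Rightarrow> complex) \<Rightarrow> real" where
  "seq_norm p x = (if p = \<infinity> then Sup (range (\<lambda>n. norm (x n)))
                   else (\<Sum>n. norm (x n) powr real_of_ereal p) powr (1 / real_of_ereal p))"

definition conj_exp :: "ereal \<Rightarrow> real" where
  "conj_exp p = (if p = \<infinity> then 1 else real_of_ereal p / (real_of_ereal p - 1))"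

definition unitv :: "nat \<Rightarrow> nat \<Rightarrow> complex" where
  "unitv k = (\<lambda>n. if n = k then 1 else 0)"

definition fexp :: "ereal \<Rightarrow> nat \<Rightarrow> ereal" where
  "fexp p j = (if j = 0 then p else \<infinity>)"

definition mdom :: "nat \<Rightarrow> ereal \<Rightarrow> (nat \<Rightarrow> complex) list set" where
  "mdom m p = {xs. length xs = m \<and> (\<forall>j<m. xs ! j \<in> seq_space (fexp p j))}"

definition multilinear_form :: "nat \<Rightarrow> ereal \<Rightarrow> ((nat \<Rightarrow> complex) list \<Rightarrow> complex) \<Rightarrow> bool" where
  "multilinear_form m p T \<longleftrightarrow>
     (\<forall>xs\<in>mdom m p. \<forall>j<m. \<forall>u\<in>seq_space (fexp p j). \<forall>v\<in>seq_space (fexp p j). \<forall>c::complex.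
        T (xs[j := (\<lambda>n. c * u n + v n)]) = c * T (xs[j := u]) + T (xs[j := v]))"

definition continuous_form :: "nat \<Rightarrow> ereal \<Rightarrow> ((nat \<Rightarrow> complex) list \<Rightarrow> complex) \<Rightarrow> bool" where
  "continuous_form m p T \<longleftrightarrow>
     (\<forall>xs\<in>mdom m p. \<forall>e>0. \<exists>d>0. \<forall>ys\<in>mdom m p.
        (\<forall>j<m. seq_norm (fexp p j) (\<lambda>n. (ys ! j) n - (xs ! j) n) < d) \<longrightarrow> norm (T ys - T xs) < e)"

definition form_norm :: "nat \<Rightarrow> ereal \<Rightarrow> ((nat \<Rightarrow> complex) list \<Rightarrow> complex) \<Rightarrow> real" where
  "form_norm m p T = Sup {norm (T xs) | xs. xs \<in> mdom m p \<and> (\<forall>j<m. seq_norm (fexp p j) (xs ! j) \<le> 1)}"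

definition idx :: "nat \<Rightarrow> nat \<Rightarrow> nat list set" where
  "idx k N = {is. length is = k \<and> set is \<subseteq> {..<N}}"

text \<open>Steinhaus variables eps^(j)_n = exp(2 pi i t(j,n)) with t(j,n) independent uniform on [0,1].\<close>
definition steinhaus_space :: "nat \<Rightarrow> nat \<Rightarrow> (nat \<times> nat \<Rightarrow> real) measure" where
  "steinhaus_space k N = PiM ({..<k} \<times> {..<N}) (\<lambda>_. uniform_measure lborel {0..1})"

definition steinhaus_moment :: "nat \<Rightarrow> real \<Rightarrow> nat \<Rightarrow> (nat list \<Rightarrow> complex) \<Rightarrow> real" where
  "steinhaus_moment k q N a =
     (\<integral>t. norm (\<Sum>is\<in>idx k N. a is * (\<Prod>j<k. cis (2 * pi * t (j, is ! j)))) powr q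
        \<partial>steinhaus_space k N)"

definition S_const :: "nat \<Rightarrow> real \<Rightarrow> real" where
  "S_const k q = Sup {S. \<forall>N a. S * sqrt (\<Sum>is\<in>idx k N. (norm (a is))\<^sup>2)
                                   \<le> steinhaus_moment k q N a powr (1 / q)}"

end

theory Submission
  imports Defs "HOL-Probability.Probability" "HOL-Analysis.Kronecker_Approximation_Theorem"
begin


lemma unif01: "uniform_measure lborel {0..1::real} = density lborel (\<lambda>x. ennreal (indicator {0..1} x))"
  unfolding uniform_measure_def by (intro arg_cong[where f="density lborel"] ext) (simp add: indicator_def)

lemma L1:
  fixes c :: int
  shows "(\<integral>x. cis (2*pi* of_int c * x) \<partial>uniform_measure lborel {0..1}) = (if c = 0 then 1 else 0)"
proof -
  have cont: "continuous_on {0..1} (\<lambda>x::real. cis (2*pi* of_int c * x))"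
    by (intro continuous_intros)
  have "(\<integral>x. cis (2*pi* of_int c * x) \<partial>uniform_measure lborel {0..1}) =
        (\<integral>x. indicator {0..1} x *\<^sub>R cis (2*pi* of_int c * x) \<partial>lborel)"
    unfolding unif01 by (subst integral_density) (auto intro!: borel_measurable_continuous_onI continuous_intros)
  also have "\<dots> = (LINT x:{0..1}|lborel. cis (2*pi* of_int c * x))"
    by (simp add: set_lebesgue_integral_def)
  also have "\<dots> = integral {0..1} (\<lambda>x. cis (2*pi* of_int c * x))"
    by (rule set_borel_integral_eq_integral(2)[OF borel_integrable_atLeastAtMost'[OF cont]])
  also have "\<dots> = (if c = 0 then 1 else 0)"
  proof (cases "c = 0")
    case True then show ?thesis by simp
  next
    case False
    define a where "a = 2*pi* of_int c*\<i>"
    have a0: "a \<noteq> 0" using False by (simp add: a_def)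
    have "(\<lambda>x::real. cis (2*pi* of_int c * x)) = (\<lambda>t. exp (a * complex_of_real t))"
      by (auto simp: cis_conv_exp a_def algebra_simps)
    moreover have "exp a = 1"
      using cis_multiple_2pi[of "of_int c"] by (simp add: a_def cis_conv_exp algebra_simps)
    ultimately show ?thesis using integral_exp[of 1 a] a0 False by simp
  qed
  finally show ?thesis .
qed



definition UU :: "real measure" where "UU = uniform_measure lborel {0..1::real}"

lemma probU: "prob_space UU"
  unfolding UU_def by (rule prob_space_uniform_measure) auto

lemma cis_meas[measurable]: "cis \<in> borel_measurable borel"
  by (intro borel_measurable_continuous_onI continuous_intros)

definition chi :: "nat \<Rightarrow> nat \<Rightarrow> (nat \<times> nat \<Rightarrow> int) \<Rightarrow> (nat \<times> nat \<Rightarrow> real) \<Rightarrow> complex" where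
  "chi k N d t = (\<Prod>ij\<in>{..<k}\<times>{..<N}. cis (2 * pi * of_int (d ij) * t ij))"

lemma SP_eq: "steinhaus_space k N = PiM ({..<k}\<times>{..<N}) (\<lambda>_. UU)"
  unfolding steinhaus_space_def UU_def ..

lemma prob_SP: "prob_space (steinhaus_space k N)"
  unfolding SP_eq by (intro prob_space_PiM probU)

lemma proj_meas: "ij \<in> I \<Longrightarrow> (\<lambda>x. x ij) \<in> borel_measurable (PiM I (\<lambda>_. UU))"
proof -
  assume "ij \<in> I"
  then have "(\<lambda>x. x ij) \<in> measurable (PiM I (\<lambda>_. UU)) UU" by (rule measurable_component_singleton)
  moreover have "(\<lambda>x. x) \<in> measurable UU borel" by (rule measurable_ident_sets) (simp add: UU_def)
  ultimately show ?thesis using measurable_compose by blast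
qed

lemma chi_meas[measurable]: "chi k N d \<in> borel_measurable (steinhaus_space k N)"
proof -
  have "(\<lambda>t. cis (2 * pi * of_int (d ij) * t ij)) \<in> borel_measurable (PiM ({..<k}\<times>{..<N}) (\<lambda>_. UU))"
    if "ij \<in> {..<k}\<times>{..<N}" for ij
    by (rule measurable_compose[OF proj_meas[OF that]]) (intro borel_measurable_continuous_onI continuous_intros)
  then show ?thesis unfolding chi_def[abs_def] SP_eq by (intro borel_measurable_prod) auto
qed

lemma norm_chi[simp]: "norm (chi k N d t) = 1"
  unfolding chi_def prod_norm[symmetric] by simp

lemma integrable_cisU: "integrable UU (\<lambda>x. cis (2 * pi * of_int c * x))"
proof -
  interpret prob_space UU by (rule probU)
  show ?thesis
    by (rule integrable_const_bound[where B=1]) (auto simp: UU_def)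
qed

lemma L2: "(\<integral>t. chi k N d t \<partial>steinhaus_space k N) =
   (if \<forall>ij\<in>{..<k}\<times>{..<N}. d ij = 0 then 1 else 0)"
proof -
  interpret prob_space UU by (rule probU)
  interpret product_sigma_finite "\<lambda>_. UU" by standard
  have "(\<integral>t. chi k N d t \<partial>steinhaus_space k N) =
     (\<Prod>ij\<in>{..<k}\<times>{..<N}. (\<integral>x. cis (2 * pi * of_int (d ij) * x) \<partial>UU))"
    unfolding SP_eq chi_def
    by (rule product_integral_prod[where f="\<lambda>ij x. cis (2 * pi * of_int (d ij) * x)"])
       (auto intro: integrable_cisU)
  also have "\<dots> = (\<Prod>ij\<in>{..<k}\<times>{..<N}. (if d ij = 0 then 1 else 0))"
    using L1 unfolding UU_def by simp
  also have "\<dots> = (if \<forall>ij\<in>{..<k}\<times>{..<N}. d ij = 0 then 1 else 0)"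
    by (auto simp: prod_zero_iff intro!: prod.neutral)
  finally show ?thesis .
qed

lemma chi_mult_cnj: "chi k N d t * cnj (chi k N d' t) = chi k N (\<lambda>ij. d ij - d' ij) t"
  unfolding chi_def cnj_prod prod.distrib[symmetric]
  by (intro prod.cong refl) (simp add: cis_cnj cis_mult algebra_simps)

lemma integrable_chi: "integrable (steinhaus_space k N) (chi k N d)"
proof -
  interpret prob_space "steinhaus_space k N" by (rule prob_SP)
  show ?thesis by (rule integrable_const_bound[where B=1]) auto
qed

lemma L3:
  assumes "finite F"
  shows "complex_of_real (\<integral>t. (norm (\<Sum>P\<in>F. w P * chi k N (f P) t))\<^sup>2 \<partial>steinhaus_space k N)
     = (\<Sum>P\<in>F. \<Sum>P'\<in>F. w P * cnj (w P') * (if \<forall>ij\<in>{..<k}\<times>{..<N}. f P ij = f P' ij then 1 else 0))"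
proof -
  have eq: "complex_of_real ((norm (\<Sum>P\<in>F. w P * chi k N (f P) t))\<^sup>2) =
      (\<Sum>P\<in>F. \<Sum>P'\<in>F. w P * cnj (w P') * chi k N (\<lambda>ij. f P ij - f P' ij) t)" for t
    unfolding complex_norm_square cnj_sum sum_product
    by (intro sum.cong refl) (simp add: chi_mult_cnj[symmetric] algebra_simps)
  have "complex_of_real (\<integral>t. (norm (\<Sum>P\<in>F. w P * chi k N (f P) t))\<^sup>2 \<partial>steinhaus_space k N)
     = (\<integral>t. (\<Sum>P\<in>F. \<Sum>P'\<in>F. w P * cnj (w P') * chi k N (\<lambda>ij. f P ij - f P' ij) t) \<partial>steinhaus_space k N)"
    unfolding integral_complex_of_real[symmetric] eq ..
  also have "\<dots> = (\<Sum>P\<in>F. \<Sum>P'\<in>F. w P * cnj (w P') * (\<integral>t. chi k N (\<lambda>ij. f P ij - f P' ij) t \<partial>steinhaus_space k N))"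
    by (simp add: integrable_chi integral_sum)
  also have "\<dots> = (\<Sum>P\<in>F. \<Sum>P'\<in>F. w P * cnj (w P') * (if \<forall>ij\<in>{..<k}\<times>{..<N}. f P ij = f P' ij then 1 else 0))"
    unfolding L2 by simp
  finally show ?thesis .
qed



definition emb :: "nat list \<Rightarrow> nat \<times> nat \<Rightarrow> int" where
  "emb A = (\<lambda>(j,n). if A ! j = n then 1 else 0)"

lemma finite_idx: "finite (idx k N)"
proof -
  have "idx k N = {xs. set xs \<subseteq> {..<N} \<and> length xs = k}" unfolding idx_def by auto
  then show ?thesis using finite_lists_length_eq[of "{..<N}" k] by simp
qed

lemma idx_nth: "L \<in> idx k N \<Longrightarrow> j < k \<Longrightarrow> L ! j < N"
  unfolding idx_def using nth_mem by blast

lemma prod_emb: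
  assumes "A \<in> idx k N"
  shows "(\<Prod>j<k. cis (2 * pi * t (j, A ! j))) = chi k N (emb A) t"
proof -
  have "chi k N (emb A) t = (\<Prod>(j,n)\<in>{..<k}\<times>{..<N}. (if A ! j = n then cis (2 * pi * t (j, n)) else 1))"
    unfolding chi_def emb_def by (intro prod.cong refl) auto
  also have "\<dots> = (\<Prod>j<k. \<Prod>n<N. (if A ! j = n then cis (2 * pi * t (j, n)) else 1))"
    by (rule prod.cartesian_product[symmetric])
  also have "\<dots> = (\<Prod>j<k. cis (2 * pi * t (j, A ! j)))"
  proof (intro prod.cong refl)
    fix j assume "j \<in> {..<k}"
    then have "A ! j \<in> {..<N}" using assms unfolding idx_def by (auto dest!: nth_mem)
    then show "(\<Prod>n<N. (if A ! j = n then cis (2 * pi * t (j, n)) else 1)) = cis (2 * pi * t (j, A ! j))"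
      by (simp add: prod.delta')
  qed
  finally show ?thesis by simp
qed

lemma emb_agree:
  assumes "A \<in> idx k N" "A' \<in> idx k N"
  shows "(\<forall>ij\<in>{..<k}\<times>{..<N}. emb A ij = emb A' ij) \<longleftrightarrow> A = A'"
proof
  assume H: "\<forall>ij\<in>{..<k}\<times>{..<N}. emb A ij = emb A' ij"
  show "A = A'"
  proof (rule nth_equalityI)
    show "length A = length A'" using assms by (simp add: idx_def)
    fix j assume "j < length A"
    then have j: "j < k" using assms by (simp add: idx_def)
    then have "A ! j < N" using assms unfolding idx_def by (auto dest!: nth_mem)
    then have "emb A (j, A ! j) = emb A' (j, A ! j)" using H j by auto
    then show "A ! j = A' ! j" by (auto simp: emb_def split: if_splits)
  qed
qed simp

lemma pair_det:
  fixes x y u v :: nat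
  assumes "x < N" "y < N"
    and H: "\<forall>n<N. (if x = n then 1 else 0) + (if y = n then 1 else 0) =
                  (if u = n then 1 else (0::int)) + (if v = n then 1 else 0)"
  shows "(x = u \<and> y = v) \<or> (x = v \<and> y = u)"
proof -
  have 1: "(if x = x then 1 else 0) + (if y = x then 1 else 0) =
                  (if u = x then 1 else (0::int)) + (if v = x then 1 else 0)" using H assms by blast
  have 2: "(if x = y then 1 else 0) + (if y = y then 1 else 0) =
                  (if u = y then 1 else (0::int)) + (if v = y then 1 else 0)" using H assms by blast
  show ?thesis using 1 2 by (auto split: if_splits)
qed

lemma fiber_card:
  assumes A: "A \<in> idx k N" and B: "B \<in> idx k N"
  shows "card {P'\<in>idx k N \<times> idx k N. \<forall>ij\<in>{..<k}\<times>{..<N}.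
            emb (fst P') ij + emb (snd P') ij = emb A ij + emb B ij} \<le> 2 ^ k"
proof -
  let ?Fib = "{P'\<in>idx k N \<times> idx k N. \<forall>ij\<in>{..<k}\<times>{..<N}.
            emb (fst P') ij + emb (snd P') ij = emb A ij + emb B ij}"
  let ?g = "\<lambda>P'. {j\<in>{..<k}. fst P' ! j \<noteq> A ! j}"
  have det: "(fst P' ! j = A ! j \<and> snd P' ! j = B ! j) \<or> (fst P' ! j = B ! j \<and> snd P' ! j = A ! j)"
    if "P' \<in> ?Fib" "j < k" for P' j
  proof -
    have l: "fst P' ! j < N" "snd P' ! j < N"
      using that idx_nth by auto
    have "\<forall>n<N. (if fst P' ! j = n then 1 else 0) + (if snd P' ! j = n then 1 else 0) =
                  (if A ! j = n then 1 else (0::int)) + (if B ! j = n then 1 else 0)"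
    proof (intro allI impI)
      fix n assume "n < N"
      then have "emb (fst P') (j,n) + emb (snd P') (j,n) = emb A (j,n) + emb B (j,n)"
        using that by auto
      then show "(if fst P' ! j = n then 1 else 0) + (if snd P' ! j = n then 1 else 0) =
                  (if A ! j = n then 1 else (0::int)) + (if B ! j = n then 1 else 0)"
        by (simp add: emb_def)
    qed
    then show ?thesis using pair_det[OF l] by blast
  qed
  have "inj_on ?g ?Fib"
  proof (rule inj_onI)
    fix P Q assume P: "P \<in> ?Fib" and Q: "Q \<in> ?Fib" and gq: "?g P = ?g Q"
    have len: "length (fst P) = k" "length (snd P) = k" "length (fst Q) = k" "length (snd Q) = k"
      using P Q by (auto simp: idx_def)
    have "fst P ! j = fst Q ! j \<and> snd P ! j = snd Q ! j" if "j < k" for j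
    proof -
      have "(fst P ! j \<noteq> A ! j) = (fst Q ! j \<noteq> A ! j)"
        using gq that by blast
      then show ?thesis using det[OF P that] det[OF Q that] by auto
    qed
    then have "fst P = fst Q" "snd P = snd Q" using len by (auto intro!: nth_equalityI)
    then show "P = Q" by (simp add: prod_eq_iff)
  qed
  moreover have "?g ` ?Fib \<subseteq> Pow {..<k}" by auto
  ultimately have "card ?Fib \<le> card (Pow {..<k::nat})"
    by (intro card_inj_on_le) auto
  also have "\<dots> = 2 ^ k" by (simp add: card_Pow)
  finally show ?thesis .
qed

lemma quad_bound:
  fixes w :: "'p \<Rightarrow> complex"
  assumes "finite F" and sym: "\<And>P Q. agr P Q \<Longrightarrow> agr Q P"
  shows "norm (\<Sum>P\<in>F. \<Sum>P'\<in>F. w P * cnj (w P') * (if agr P P' then 1 else 0))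
      \<le> (\<Sum>P\<in>F. (norm (w P))\<^sup>2 * card {P'\<in>F. agr P P'})"
proof -
  have "norm (\<Sum>P\<in>F. \<Sum>P'\<in>F. w P * cnj (w P') * (if agr P P' then 1 else 0))
      \<le> (\<Sum>P\<in>F. \<Sum>P'\<in>F. norm (w P * cnj (w P') * (if agr P P' then 1 else 0)))"
    by (rule order.trans[OF norm_sum sum_mono[OF norm_sum]])
  also have "\<dots> \<le> (\<Sum>P\<in>F. \<Sum>P'\<in>F. (if agr P P' then (norm (w P))\<^sup>2 / 2 + (norm (w P'))\<^sup>2 / 2 else 0))"
  proof (intro sum_mono)
    fix P P' show "norm (w P * cnj (w P') * (if agr P P' then 1 else 0))
       \<le> (if agr P P' then (norm (w P))\<^sup>2 / 2 + (norm (w P'))\<^sup>2 / 2 else 0)"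
      using sum_squares_bound[of "norm (w P)" "norm (w P')"]
      by (auto simp: norm_mult)
  qed
  also have "\<dots> = (\<Sum>P\<in>F. \<Sum>P'\<in>F. (if agr P P' then (norm (w P))\<^sup>2 / 2 else 0))
                 + (\<Sum>P\<in>F. \<Sum>P'\<in>F. (if agr P P' then (norm (w P'))\<^sup>2 / 2 else 0))"
    by (simp add: sum.distrib[symmetric] if_distrib cong: if_cong)
  also have "(\<Sum>P\<in>F. \<Sum>P'\<in>F. (if agr P P' then (norm (w P'))\<^sup>2 / 2 else 0))
       = (\<Sum>P\<in>F. \<Sum>P'\<in>F. (if agr P P' then (norm (w P))\<^sup>2 / 2 else 0))"
    by (subst sum.swap) (intro sum.cong refl, auto intro: sym)
  also have "(\<Sum>P\<in>F. \<Sum>P'\<in>F. (if agr P P' then (norm (w P))\<^sup>2 / 2 else 0))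
        = (\<Sum>P\<in>F. (norm (w P))\<^sup>2 / 2 * card {P'\<in>F. agr P P'})"
    using assms(1) by (intro sum.cong refl) (simp add: sum.If_cases Int_def)
  finally show ?thesis by (simp add: sum_divide_distrib[symmetric])
qed



definition XX :: "nat \<Rightarrow> nat \<Rightarrow> (nat list \<Rightarrow> complex) \<Rightarrow> (nat \<times> nat \<Rightarrow> real) \<Rightarrow> complex" where
  "XX k N a t = (\<Sum>A\<in>idx k N. a A * chi k N (emb A) t)"

lemma X_eq: "(\<Sum>is\<in>idx k N. a is * (\<Prod>j<k. cis (2 * pi * t (j, is ! j)))) = XX k N a t"
  unfolding XX_def by (intro sum.cong refl) (simp add: prod_emb)

lemma XX_meas[measurable]: "XX k N a \<in> borel_measurable (steinhaus_space k N)"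
  unfolding XX_def[abs_def] by measurable

lemma norm_XX_le: "norm (XX k N a t) \<le> (\<Sum>A\<in>idx k N. norm (a A))"
  unfolding XX_def by (rule order.trans[OF norm_sum]) (simp add: norm_mult)

lemma chi_mult: "chi k N d t * chi k N d' t = chi k N (\<lambda>ij. d ij + d' ij) t"
  unfolding chi_def prod.distrib[symmetric]
  by (intro prod.cong refl) (simp add: cis_mult algebra_simps)

lemma M2: "(\<integral>t. (norm (XX k N a t))\<^sup>2 \<partial>steinhaus_space k N) = (\<Sum>A\<in>idx k N. (norm (a A))\<^sup>2)"
proof -
  have "complex_of_real (\<integral>t. (norm (XX k N a t))\<^sup>2 \<partial>steinhaus_space k N)
     = (\<Sum>A\<in>idx k N. \<Sum>A'\<in>idx k N. a A * cnj (a A') * (if \<forall>ij\<in>{..<k}\<times>{..<N}. emb A ij = emb A' ij then 1 else 0))"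
    unfolding XX_def by (rule L3[OF finite_idx])
  also have "\<dots> = (\<Sum>A\<in>idx k N. \<Sum>A'\<in>idx k N. a A * cnj (a A') * (if A = A' then 1 else 0))"
    by (intro sum.cong refl) (subst emb_agree, auto)
  also have "\<dots> = (\<Sum>A\<in>idx k N. a A * cnj (a A))"
    by (intro sum.cong refl) (simp add: if_distrib finite_idx cong: if_cong)
  also have "\<dots> = complex_of_real (\<Sum>A\<in>idx k N. (norm (a A))\<^sup>2)"
    by (simp add: complex_norm_square del: of_real_power)
  finally show ?thesis by (simp only: of_real_eq_iff)
qed

lemma M4: "(\<integral>t. (norm (XX k N a t))^4 \<partial>steinhaus_space k N) \<le> 2 ^ k * (\<Sum>A\<in>idx k N. (norm (a A))\<^sup>2)\<^sup>2"
proof -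
  let ?F = "idx k N \<times> idx k N"
  let ?w = "\<lambda>P. a (fst P) * a (snd P)"
  let ?f = "\<lambda>P ij. emb (fst P) ij + emb (snd P) ij"
  let ?agr = "\<lambda>P P'. \<forall>ij\<in>{..<k}\<times>{..<N}. ?f P ij = ?f P' ij"
  have fin: "finite ?F" by (simp add: finite_idx)
  have sq: "XX k N a t * XX k N a t = (\<Sum>P\<in>?F. ?w P * chi k N (?f P) t)" for t
    unfolding XX_def sum_product sum.cartesian_product
    by (intro sum.cong refl) (simp add: split_beta chi_mult[symmetric] algebra_simps)
  have four: "(norm (XX k N a t))^4 = (norm (\<Sum>P\<in>?F. ?w P * chi k N (?f P) t))\<^sup>2" for t
    unfolding sq[symmetric] by (simp add: norm_mult power2_eq_square power4_eq_xxxx)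
  have nonneg: "0 \<le> (\<integral>t. (norm (XX k N a t))^4 \<partial>steinhaus_space k N)" by simp
  have "(\<integral>t. (norm (XX k N a t))^4 \<partial>steinhaus_space k N)
     = norm (complex_of_real (\<integral>t. (norm (\<Sum>P\<in>?F. ?w P * chi k N (?f P) t))\<^sup>2 \<partial>steinhaus_space k N))"
    unfolding four[symmetric] using nonneg by simp
  also have "\<dots> = norm (\<Sum>P\<in>?F. \<Sum>P'\<in>?F. ?w P * cnj (?w P') * (if ?agr P P' then 1 else 0))"
    by (subst L3[OF fin]) simp
  also have "\<dots> \<le> (\<Sum>P\<in>?F. (norm (?w P))\<^sup>2 * card {P'\<in>?F. ?agr P P'})"
    by (rule quad_bound[OF fin]) auto
  also have "\<dots> \<le> (\<Sum>P\<in>?F. (norm (?w P))\<^sup>2 * 2 ^ k)"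
  proof (intro sum_mono mult_left_mono)
    fix P assume P: "P \<in> ?F"
    have E: "{P'\<in>?F. ?agr P P'} = {P'\<in>idx k N \<times> idx k N. \<forall>ij\<in>{..<k}\<times>{..<N}.
            emb (fst P') ij + emb (snd P') ij = emb (fst P) ij + emb (snd P) ij}"
      by auto
    have Pf: "fst P \<in> idx k N" "snd P \<in> idx k N" using P by auto
    have "card {P'\<in>?F. ?agr P P'} \<le> 2 ^ k"
      unfolding E by (rule fiber_card[OF Pf(1) Pf(2)])
    then have "real (card {P'\<in>?F. ?agr P P'}) \<le> real (2 ^ k)"
      by (rule of_nat_mono)
    then show "real (card {P'\<in>?F. ?agr P P'}) \<le> 2 ^ k" by simp
  qed simp
  also have "\<dots> = 2 ^ k * (\<Sum>A\<in>idx k N. \<Sum>B\<in>idx k N. (norm (a A))\<^sup>2 * (norm (a B))\<^sup>2)"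
    unfolding sum.cartesian_product sum_distrib_left
    by (intro sum.cong refl) (simp add: split_beta norm_mult power_mult_distrib)
  also have "\<dots> = 2 ^ k * (\<Sum>A\<in>idx k N. (norm (a A))\<^sup>2)\<^sup>2"
    by (simp add: power2_eq_square[of "sum _ _"] sum_product)
  finally show ?thesis .
qed



lemma amgm_ptw:
  fixes s l :: real
  assumes "0 \<le> s" "0 < l"
  shows "s\<^sup>2 \<le> l * s + s\<^sup>2 / 8 + s ^ 4 / (8 * l\<^sup>2)"
proof -
  have a: "0 \<le> s * (2 * l - s)\<^sup>2 / (4 * l)" using assms by simp
  have b: "s * (2 * l - s)\<^sup>2 / (4 * l) = l * s - s\<^sup>2 + s ^ 3 / (4 * l)"
    using assms by (simp add: field_simps power2_eq_square power3_eq_cube)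
  have c: "0 \<le> s\<^sup>2 * (l - s)\<^sup>2 / (8 * l\<^sup>2)" using assms by simp
  have d: "s\<^sup>2 * (l - s)\<^sup>2 / (8 * l\<^sup>2) = s\<^sup>2 / 8 - s ^ 3 / (4 * l) + s ^ 4 / (8 * l\<^sup>2)"
    using assms by (simp add: field_simps power2_eq_square power3_eq_cube power4_eq_xxxx)
  show ?thesis using a b c d by linarith
qed

lemma young_ptw:
  fixes s mu q :: real
  assumes "0 \<le> s" "0 < mu" "1 \<le> q"
  shows "s \<le> (1/q) * (mu powr (1 - q) * s powr q) + (1 - 1/q) * mu"
proof (cases "s = 0")
  case True then show ?thesis using assms by simp
next
  case False
  then have s: "0 < s" using assms by simp
  have "(s powr q * mu powr (1 - q)) powr (1/q) * mu powr (1 - 1/q)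
        \<le> (1/q) * (s powr q * mu powr (1 - q)) + (1 - 1/q) * mu"
    using assms s by (intro Youngs_inequality_0) auto
  moreover have "(s powr q * mu powr (1 - q)) powr (1/q) * mu powr (1 - 1/q) = s"
  proof -
    have "(s powr q * mu powr (1 - q)) powr (1/q) * mu powr (1 - 1/q)
        = s * (mu powr ((1 - q) / q) * mu powr (1 - 1/q))"
      using assms s by (simp add: powr_mult powr_powr)
    also have "mu powr ((1 - q) / q) * mu powr (1 - 1/q) = mu powr ((1 - q) / q + (1 - 1/q))"
      by (simp add: powr_add)
    also have "(1 - q) / q + (1 - 1/q) = 0" using assms by (simp add: field_simps)
    finally show ?thesis using assms by simp
  qed
  ultimately show ?thesis by (simp add: mult.commute)
qed

lemma Khin:
  assumes q: "1 \<le> q"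
  shows "3 / (4 * sqrt (2 ^ k)) * sqrt (\<Sum>A\<in>idx k N. (norm (a A))\<^sup>2)
         \<le> steinhaus_moment k q N a powr (1/q)"
proof -
  interpret prob_space "steinhaus_space k N" by (rule prob_SP)
  define s where "s = (\<lambda>t. norm (XX k N a t))"
  define B where "B = (\<Sum>A\<in>idx k N. norm (a A))"
  have s0: "0 \<le> s t" for t by (simp add: s_def)
  have sB: "s t \<le> B" for t unfolding s_def B_def by (rule norm_XX_le)
  have smeas[measurable]: "s \<in> borel_measurable (steinhaus_space k N)" unfolding s_def by measurable
  have int1: "integrable (steinhaus_space k N) s"
    by (rule integrable_const_bound[where B=B]) (auto simp: s0 sB)
  have int2: "integrable (steinhaus_space k N) (\<lambda>t. (s t)\<^sup>2)"
    by (rule integrable_const_bound[where B="B\<^sup>2"]) (auto simp: s0 sB intro!: power_mono)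
  have int4: "integrable (steinhaus_space k N) (\<lambda>t. (s t) ^ 4)"
    by (rule integrable_const_bound[where B="B ^ 4"]) (auto simp: s0 sB intro!: power_mono)
  have intq: "integrable (steinhaus_space k N) (\<lambda>t. (s t) powr q)"
    by (rule integrable_const_bound[where B="B powr q"]) (use q in \<open>auto simp: s0 sB intro!: AE_I2 powr_mono2\<close>)
  have mom: "steinhaus_moment k q N a = (\<integral>t. (s t) powr q \<partial>steinhaus_space k N)"
    unfolding steinhaus_moment_def X_eq s_def ..
  define M where "M = (\<Sum>A\<in>idx k N. (norm (a A))\<^sup>2)"
  have EM: "(\<integral>t. (s t)\<^sup>2 \<partial>steinhaus_space k N) = M" unfolding s_def M_def by (rule M2)
  have E4: "(\<integral>t. (s t)^4 \<partial>steinhaus_space k N) \<le> 2 ^ k * M\<^sup>2" unfolding s_def M_def by (rule M4)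
  have M0: "0 \<le> M" unfolding M_def by (simp add: sum_nonneg)
  show ?thesis
  proof (cases "M = 0")
    case True then show ?thesis by (simp add: M_def[symmetric])
  next
    case False
    then have Mp: "0 < M" using M0 by simp
    define r where "r = sqrt M"
    define g where "g = sqrt (2 ^ k :: real)"
    define l where "l = g * r"
    have rp: "0 < r" "r\<^sup>2 = M" using Mp by (auto simp: r_def)
    have gp: "0 < g" "g\<^sup>2 = 2 ^ k" by (auto simp: g_def)
    have lp: "0 < l" "l\<^sup>2 = 2 ^ k * M" using rp gp by (auto simp: l_def power_mult_distrib)
    define E1 where "E1 = (\<integral>t. s t \<partial>steinhaus_space k N)"
    have "(\<integral>t. (s t)\<^sup>2 \<partial>steinhaus_space k N)
        \<le> (\<integral>t. l * s t + (s t)\<^sup>2 / 8 + (s t) ^ 4 / (8 * l\<^sup>2) \<partial>steinhaus_space k N)"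
      by (intro integral_mono int2 amgm_ptw s0 lp Bochner_Integration.integrable_add
          integrable_mult_right integrable_divide int1 int4)
    also have "\<dots> = l * E1 + M / 8 + (\<integral>t. (s t)^4 \<partial>steinhaus_space k N) / (8 * l\<^sup>2)"
      using int1 int2 int4 EM unfolding E1_def
      by (simp add: Bochner_Integration.integral_add integrable_mult_right integrable_divide)
    finally have "M \<le> l * E1 + M / 8 + (\<integral>t. (s t)^4 \<partial>steinhaus_space k N) / (8 * l\<^sup>2)"
      using EM by simp
    also have "(\<integral>t. (s t)^4 \<partial>steinhaus_space k N) / (8 * l\<^sup>2) \<le> (2 ^ k * M\<^sup>2) / (8 * l\<^sup>2)"
      using E4 lp M0 by (intro divide_right_mono) auto
    also have "(2 ^ k * M\<^sup>2) / (8 * l\<^sup>2) = M / 8"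
      using lp Mp by (simp add: power2_eq_square field_simps)
    finally have h34: "3 * M / 4 \<le> l * E1" by simp
    have eqM: "M = r*r" using rp(2) by (simp add: power2_eq_square)
    have "r * (3 * r) \<le> r * (4 * g * E1)" using h34 eqM l_def by (simp add: algebra_simps)
    then have "3 * r \<le> 4 * g * E1" using rp(1) by (rule mult_left_le_imp_le)
    then have E1lb: "3 / (4 * g) * r \<le> E1" using rp gp by (simp add: field_simps)
    then have E1p: "0 < E1" using rp gp by (smt (verit) divide_pos_pos mult_pos_pos)
    have "E1 \<le> (\<integral>t. (1/q) * (E1 powr (1 - q) * s t powr q) + (1 - 1/q) * E1 \<partial>steinhaus_space k N)"
      unfolding E1_def[symmetric, of]
      using int1 intq E1p q
      by (subst (1) E1_def, intro integral_mono young_ptw s0) (auto intro!: Bochner_Integration.integrable_add integrable_mult_right)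
    also have "\<dots> = (1/q) * (E1 powr (1 - q) * (\<integral>t. s t powr q \<partial>steinhaus_space k N)) + (1 - 1/q) * E1"
      using intq by (simp add: Bochner_Integration.integral_add integrable_mult_right prob_space)
    finally have "E1 / q \<le> (1/q) * (E1 powr (1 - q) * (\<integral>t. s t powr q \<partial>steinhaus_space k N))"
      by (simp add: field_simps)
    then have "E1 \<le> E1 powr (1 - q) * (\<integral>t. s t powr q \<partial>steinhaus_space k N)"
      using q by (simp add: field_simps)
    then have "E1 powr (q - 1) * E1 \<le> E1 powr (q - 1) * (E1 powr (1 - q) * (\<integral>t. s t powr q \<partial>steinhaus_space k N))"
      using E1p by (intro mult_left_mono) auto
    then have Eq: "E1 powr q \<le> (\<integral>t. s t powr q \<partial>steinhaus_space k N)"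
      using E1p by (simp add: powr_add[symmetric] mult.assoc[symmetric] powr_diff powr_minus field_simps)
    have "E1 = (E1 powr q) powr (1/q)" using E1p q by (simp add: powr_powr)
    also have "\<dots> \<le> (\<integral>t. s t powr q \<partial>steinhaus_space k N) powr (1/q)"
      using Eq E1p q by (intro powr_mono2) auto
    finally show ?thesis using E1lb unfolding mom g_def r_def M_def by simp
  qed
qed



definition fs :: "(nat \<Rightarrow> complex) \<Rightarrow> bool" where
  "fs x \<longleftrightarrow> (\<exists>K. \<forall>n\<ge>K. x n = 0)"

lemma fs_space: "fs x \<Longrightarrow> x \<in> seq_space P"
proof -
  assume "fs x"
  then obtain K where K: "\<And>n. n \<ge> K \<Longrightarrow> x n = 0" unfolding fs_def by blast
  show ?thesis
  proof (cases "P = \<infinity>")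
    case True
    have "eventually (\<lambda>n. x n = 0) sequentially" using K by (auto simp: eventually_sequentially)
    then have "x \<longlonglongrightarrow> 0" by (rule tendsto_eventually)
    then show ?thesis using True by (simp add: seq_space_def)
  next
    case False
    have "summable (\<lambda>n. norm (x n) powr real_of_ereal P)"
      by (rule summable_finite[of "{..<K}"]) (auto simp: K)
    then show ?thesis using False by (simp add: seq_space_def)
  qed
qed

lemma fs_zero[simp]: "fs (\<lambda>n. 0)" by (auto simp: fs_def)

lemma fs_unitv[simp]: "fs (unitv i)"
  unfolding fs_def unitv_def by (intro exI[of _ "Suc i"]) auto

lemma fs_add: "fs x \<Longrightarrow> fs y \<Longrightarrow> fs (\<lambda>n. x n + y n)"
proof -
  assume "fs x" "fs y"
  then obtain K1 K2 where "\<And>n. n \<ge> K1 \<Longrightarrow> x n = 0" "\<And>n. n \<ge> K2 \<Longrightarrow> y n = 0" unfolding fs_def by blast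
  then show ?thesis unfolding fs_def by (intro exI[of _ "max K1 K2"]) auto
qed

lemma fs_scale: "fs x \<Longrightarrow> fs (\<lambda>n. c * x n)"
  unfolding fs_def by auto

lemma fs_sum: "finite F \<Longrightarrow> (\<And>i. i \<in> F \<Longrightarrow> fs (f i)) \<Longrightarrow> fs (\<lambda>n. \<Sum>i\<in>F. c i * f i n)"
proof (induction F rule: finite_induct)
  case empty then show ?case by simp
next
  case (insert i F)
  then show ?case by (simp add: fs_add fs_scale)
qed

definition fvec :: "nat \<Rightarrow> (nat \<Rightarrow> complex) \<Rightarrow> nat \<Rightarrow> complex" where
  "fvec N c = (\<lambda>n. if n < N then c n else 0)"

lemma fs_vec[simp]: "fs (fvec N c)"
  unfolding fs_def fvec_def by (intro exI[of _ N]) auto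

lemma vec_sum: "fvec N c = (\<lambda>n. \<Sum>i<N. c i * unitv i n)"
  unfolding fvec_def unitv_def by (auto simp: if_distrib cong: if_cong)

lemma mdom_fs: "length xs = m \<Longrightarrow> (\<And>x. x \<in> set xs \<Longrightarrow> fs x) \<Longrightarrow> xs \<in> mdom m p"
  unfolding mdom_def by (auto intro: fs_space)

lemma mlin_app:
  assumes "multilinear_form m p T" "xs \<in> mdom m p" "j < m" "u \<in> seq_space (fexp p j)" "v \<in> seq_space (fexp p j)"
  shows "T (xs[j := (\<lambda>n. c * u n + v n)]) = c * T (xs[j := u]) + T (xs[j := v])"
  using assms unfolding multilinear_form_def by blast

lemma T_zero:
  assumes hML: "multilinear_form m p T" and xs: "xs \<in> mdom m p" and j: "j < m"
  shows "T (xs[j := (\<lambda>n. 0)]) = 0"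
proof -
  have z: "(\<lambda>n::nat. 0::complex) \<in> seq_space (fexp p j)" by (rule fs_space) simp
  have "T (xs[j := (\<lambda>n. 1 * 0 + 0)]) = 1 * T (xs[j := (\<lambda>n. 0)]) + T (xs[j := (\<lambda>n. 0)])"
    by (rule mlin_app[OF hML xs j z z])
  then show ?thesis by simp
qed

lemma T_lin_fin:
  assumes hML: "multilinear_form m p T" and xs: "xs \<in> mdom m p" and j: "j < m"
    and F: "finite F" and f: "\<And>i. i \<in> F \<Longrightarrow> fs (f i)"
  shows "T (xs[j := (\<lambda>n. \<Sum>i\<in>F. c i * f i n)]) = (\<Sum>i\<in>F. c i * T (xs[j := f i]))"
  using F f
proof (induction F rule: finite_induct)
  case empty then show ?case using T_zero[OF hML xs j] by simp
next
  case (insert i F)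
  have u: "f i \<in> seq_space (fexp p j)" using insert by (intro fs_space) auto
  have v: "(\<lambda>n. \<Sum>i\<in>F. c i * f i n) \<in> seq_space (fexp p j)"
    using insert by (intro fs_space fs_sum) auto
  have "T (xs[j := (\<lambda>n. \<Sum>i\<in>insert i F. c i * f i n)])
      = T (xs[j := (\<lambda>n. c i * f i n + (\<lambda>n. \<Sum>i\<in>F. c i * f i n) n)])"
    using insert by simp
  also have "\<dots> = c i * T (xs[j := f i]) + T (xs[j := (\<lambda>n. \<Sum>i\<in>F. c i * f i n)])"
    by (rule mlin_app[OF hML xs j u v])
  also have "\<dots> = (\<Sum>i\<in>insert i F. c i * T (xs[j := f i]))"
    using insert by simp
  finally show ?case .
qed



lemma idx_0: "idx 0 N = {[]}" by (auto simp: idx_def)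

lemma idx_snoc: "idx (Suc n) N = (\<lambda>(is,i). is @ [i]) ` (idx n N \<times> {..<N})"
proof
  show "idx (Suc n) N \<subseteq> (\<lambda>(is,i). is @ [i]) ` (idx n N \<times> {..<N})"
  proof
    fix xs assume xs: "xs \<in> idx (Suc n) N"
    then have "xs \<noteq> []" by (auto simp: idx_def)
    then have e: "xs = butlast xs @ [last xs]" by simp
    have "last xs \<in> set xs" using \<open>xs \<noteq> []\<close> by simp
    then have "butlast xs \<in> idx n N" "last xs \<in> {..<N}"
      using xs in_set_butlastD[of _ xs] by (auto simp: idx_def)
    then show "xs \<in> (\<lambda>(is,i). is @ [i]) ` (idx n N \<times> {..<N})"
      using e by (intro image_eqI[of _ _ "(butlast xs, last xs)"]) auto
  qed
qed (auto simp: idx_def)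

lemma inj_snoc: "inj_on (\<lambda>(is::nat list,i::nat). is @ [i]) A"
  by (auto simp: inj_on_def)

lemma idx_cons: "idx (Suc n) N = (\<lambda>(i,r). i # r) ` ({..<N} \<times> idx n N)"
proof
  show "idx (Suc n) N \<subseteq> (\<lambda>(i,r). i # r) ` ({..<N} \<times> idx n N)"
  proof
    fix xs assume xs: "xs \<in> idx (Suc n) N"
    then obtain i r where e: "xs = i # r" by (cases xs) (auto simp: idx_def)
    have "i \<in> {..<N}" "r \<in> idx n N" using xs e by (auto simp: idx_def)
    then show "xs \<in> (\<lambda>(i,r). i # r) ` ({..<N} \<times> idx n N)"
      using e by (intro image_eqI[of _ _ "(i, r)"]) auto
  qed
qed (auto simp: idx_def)

lemma inj_cons: "inj_on (\<lambda>(i::nat,r::nat list). i # r) A"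
  by (auto simp: inj_on_def)

lemma drop_upd_same: "n < length ys \<Longrightarrow> drop n (ys[n := v]) = v # drop (Suc n) ys"
  by (simp add: upd_conv_take_nth_drop)

lemma upd_app_drop: "length L = n \<Longrightarrow> n < length ys \<Longrightarrow> (L @ drop n ys)[n := v] = L @ v # drop (Suc n) ys"
  by (subst Cons_nth_drop_Suc[symmetric]) (simp_all add: list_update_append)

lemma T_expand_gen:
  assumes hML: "multilinear_form m p T"
  shows "length ys = m \<Longrightarrow> (\<forall>y\<in>set ys. fs y) \<Longrightarrow> length cs \<le> m \<Longrightarrow>
    T (map (fvec N) cs @ drop (length cs) ys) =
    (\<Sum>is\<in>idx (length cs) N. (\<Prod>j<length cs. (cs ! j) (is ! j)) * T (map unitv is @ drop (length cs) ys))"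
proof (induction cs arbitrary: ys rule: rev_induct)
  case Nil then show ?case by (simp add: idx_0)
next
  case (snoc c cs)
  define n where "n = length cs"
  have nm: "n < m" using snoc.prems by (simp add: n_def)
  define ys' where "ys' = ys[n := fvec N c]"
  have ys'l: "length ys' = m" using snoc.prems by (simp add: ys'_def)
  have ys'fs: "\<forall>y\<in>set ys'. fs y" using snoc.prems set_update_subset_insert[of ys n "fvec N c"]
    by (auto simp: ys'_def)
  have dys': "drop n ys' = fvec N c # drop (Suc n) ys"
    using nm snoc.prems by (simp add: ys'_def drop_upd_same)
  have "T (map (fvec N) (cs @ [c]) @ drop (length (cs @ [c])) ys) = T (map (fvec N) cs @ drop n ys')"
    using dys' by (simp add: n_def)
  also have "\<dots> = (\<Sum>is\<in>idx n N. (\<Prod>j<n. (cs ! j) (is ! j)) * T (map unitv is @ drop n ys'))"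
    using snoc.IH[OF ys'l ys'fs] nm by (simp add: n_def)
  also have "\<dots> = (\<Sum>is\<in>idx n N. \<Sum>i<N. (\<Prod>j<n. (cs ! j) (is ! j)) * c i * T (map unitv (is @ [i]) @ drop (Suc n) ys))"
  proof (intro sum.cong refl)
    fix "is" assume is_: "is \<in> idx n N"
    define Lz where "Lz = map unitv is @ drop n ys"
    have lis: "length (map unitv is) = n" using is_ by (simp add: idx_def)
    have lys: "n < length ys" using nm snoc.prems by simp
    have Lz_dom: "Lz \<in> mdom m p"
      unfolding Lz_def using snoc.prems lis lys
      by (intro mdom_fs) (auto dest: in_set_dropD)
    have Lzn: "n < m" by (rule nm)
    have "map unitv is @ drop n ys' = Lz[n := fvec N c]"
      unfolding Lz_def dys' by (rule upd_app_drop[OF lis lys, symmetric])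
    also have "\<dots> = Lz[n := (\<lambda>k. \<Sum>i<N. c i * unitv i k)]" by (simp add: vec_sum)
    finally have "T (map unitv is @ drop n ys') = (\<Sum>i<N. c i * T (Lz[n := unitv i]))"
      using T_lin_fin[OF hML Lz_dom Lzn, of "{..<N}" unitv c] by simp
    also have "\<dots> = (\<Sum>i<N. c i * T (map unitv (is @ [i]) @ drop (Suc n) ys))"
      unfolding Lz_def using upd_app_drop[OF lis lys] by simp
    finally show "(\<Prod>j<n. (cs ! j) (is ! j)) * T (map unitv is @ drop n ys') =
        (\<Sum>i<N. (\<Prod>j<n. (cs ! j) (is ! j)) * c i * T (map unitv (is @ [i]) @ drop (Suc n) ys))"
      by (simp add: sum_distrib_left mult.assoc)
  qed
  also have "\<dots> = (\<Sum>P\<in>idx n N \<times> {..<N}. (\<Prod>j<Suc n. ((cs @ [c]) ! j) ((fst P @ [snd P]) ! j)) *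
                     T (map unitv (fst P @ [snd P]) @ drop (Suc n) ys))"
    unfolding sum.cartesian_product
  proof (intro sum.cong refl)
    fix P assume P: "P \<in> idx n N \<times> {..<N}"
    obtain "is" i where Pe: "P = (is, i)" by (cases P)
    have lis: "length is = n" using P Pe by (simp add: idx_def)
    have "(\<Prod>j<Suc n. ((cs @ [c]) ! j) ((is @ [i]) ! j)) = (\<Prod>j<n. (cs ! j) (is ! j)) * c i"
      using lis by (simp add: nth_append n_def)
    then show "(case P of (is, i) \<Rightarrow> (\<Prod>j<n. (cs ! j) (is ! j)) * c i * T (map unitv (is @ [i]) @ drop (Suc n) ys)) =
          (\<Prod>j<Suc n. ((cs @ [c]) ! j) ((fst P @ [snd P]) ! j)) * T (map unitv (fst P @ [snd P]) @ drop (Suc n) ys)"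
      by (simp add: Pe)
  qed
  also have "\<dots> = (\<Sum>is\<in>idx (Suc n) N. (\<Prod>j<Suc n. ((cs @ [c]) ! j) (is ! j)) * T (map unitv is @ drop (Suc n) ys))"
    unfolding idx_snoc
    by (subst sum.reindex[OF inj_snoc]) (simp add: split_beta)
  finally show ?case by (simp add: n_def)
qed

lemma T_expand:
  assumes hML: "multilinear_form m p T" and l: "length cs = m"
  shows "T (map (fvec N) cs) = (\<Sum>is\<in>idx m N. (\<Prod>j<m. (cs ! j) (is ! j)) * T (map unitv is))"
  using T_expand_gen[OF hML, of "replicate m (\<lambda>n. 0)" cs N] l by simp



lemma c0_bdd: "x \<longlonglongrightarrow> 0 \<Longrightarrow> bdd_above (range (\<lambda>n. norm (x n)))"
proof -
  assume "x \<longlonglongrightarrow> 0"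
  then have "Bseq x" by (intro convergent_imp_Bseq convergentI)
  then obtain K where "\<forall>n. norm (x n) \<le> K" by (rule BseqE) blast
  then show ?thesis by (intro bdd_aboveI2) auto
qed

lemma sc_space: "x \<in> seq_space P \<Longrightarrow> (\<lambda>n. c * x n) \<in> seq_space P"
proof -
  assume x: "x \<in> seq_space P"
  show ?thesis
  proof (cases "P = \<infinity>")
    case True
    then have "x \<longlonglongrightarrow> 0" using x by (simp add: seq_space_def)
    then have "(\<lambda>n. c * x n) \<longlonglongrightarrow> c * 0" by (intro tendsto_intros)
    then show ?thesis using True by (simp add: seq_space_def)
  next
    case False
    then have s: "summable (\<lambda>n. norm (x n) powr real_of_ereal P)" using x by (simp add: seq_space_def)
    have "summable (\<lambda>n. norm c powr real_of_ereal P * norm (x n) powr real_of_ereal P)"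
      by (rule summable_mult[OF s])
    then have "summable (\<lambda>n. norm (c * x n) powr real_of_ereal P)"
      by (simp add: norm_mult powr_mult)
    then show ?thesis using False by (simp add: seq_space_def)
  qed
qed

lemma seq_norm_scale_le:
  assumes x: "x \<in> seq_space P" and P: "P = \<infinity> \<or> 0 < real_of_ereal P"
  shows "seq_norm P (\<lambda>n. c * x n) \<le> norm c * seq_norm P x"
proof (cases "P = \<infinity>")
  case True
  then have "x \<longlonglongrightarrow> 0" using x by (simp add: seq_space_def)
  then have b: "bdd_above (range (\<lambda>n. norm (x n)))" by (rule c0_bdd)
  have "(SUP n. norm (c * x n)) \<le> norm c * (SUP n. norm (x n))"
  proof (rule cSUP_least)
    fix n :: nat
    have "norm (x n) \<le> (SUP n. norm (x n))" by (rule cSUP_upper[OF _ b]) simp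
    then show "norm (c * x n) \<le> norm c * (SUP n. norm (x n))"
      by (simp add: norm_mult mult_left_mono)
  qed simp
  then show ?thesis using True by (simp add: seq_norm_def)
next
  case False
  define r where "r = real_of_ereal P"
  have r: "0 < r" using P False by (simp add: r_def)
  have s: "summable (\<lambda>n. norm (x n) powr r)" using x False by (simp add: seq_space_def r_def)
  have "(\<Sum>n. norm (c * x n) powr r) = norm c powr r * (\<Sum>n. norm (x n) powr r)"
    by (simp add: norm_mult powr_mult suminf_mult[OF s])
  then have "(\<Sum>n. norm (c * x n) powr r) powr (1/r) = (norm c powr r) powr (1/r) * (\<Sum>n. norm (x n) powr r) powr (1/r)"
    by (simp add: powr_mult suminf_nonneg[OF s])
  also have "(norm c powr r) powr (1/r) = norm c" using r by (simp add: powr_powr)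
  finally show ?thesis using False by (simp add: seq_norm_def r_def)
qed

lemma seq_norm_zero: "seq_norm P (\<lambda>n. 0) = 0"
  by (simp add: seq_norm_def)

lemma fexp_ok: "p \<ge> 2 \<Longrightarrow> fexp p j = \<infinity> \<or> 0 < real_of_ereal (fexp p j)"
  by (cases p) (auto simp: fexp_def)

lemma mdom_nth: "xs \<in> mdom m p \<Longrightarrow> j < m \<Longrightarrow> xs ! j \<in> seq_space (fexp p j)"
  by (simp add: mdom_def)

lemma T_homog_gen:
  assumes hML: "multilinear_form m p T" and xs: "xs \<in> mdom m p"
  shows "n \<le> m \<Longrightarrow> T (map (\<lambda>x n. c * x n) (take n xs) @ drop n xs) = c ^ n * T xs"
proof (induction n)
  case 0 then show ?case by simp
next
  case (Suc n)
  have nm: "n < m" using Suc by simp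
  have lxs: "length xs = m" using xs by (simp add: mdom_def)
  define L where "L = map (\<lambda>x n. c * x n) (take n xs) @ drop n xs"
  have lL0: "length (map (\<lambda>x n. c * x n) (take n xs)) = n" using nm lxs by simp
  have Lnth: "L ! j = (if j < n then (\<lambda>k. c * (xs ! j) k) else xs ! j)" if "j < m" for j
    using that nm lxs by (auto simp: L_def nth_append)
  have Ldom: "L \<in> mdom m p"
    unfolding mdom_def
  proof (intro CollectI conjI allI impI)
    show "length L = m" using nm lxs by (simp add: L_def)
    fix j assume j: "j < m"
    show "L ! j \<in> seq_space (fexp p j)"
      using Lnth[OF j] mdom_nth[OF xs j] by (auto intro: sc_space)
  qed
  have u: "xs ! n \<in> seq_space (fexp p n)" by (rule mdom_nth[OF xs nm])
  have z: "(\<lambda>k. 0) \<in> seq_space (fexp p n)" by (rule fs_space) simp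
  have "T (L[n := (\<lambda>k. c * (xs ! n) k + 0)]) = c * T (L[n := xs ! n]) + T (L[n := (\<lambda>k. 0)])"
    by (rule mlin_app[OF hML Ldom nm u z])
  moreover have "L[n := xs ! n] = L" using Lnth[OF nm] list_update_id[of L n] by simp
  moreover have "T (L[n := (\<lambda>k. 0)]) = 0" by (rule T_zero[OF hML Ldom nm])
  moreover have "L[n := (\<lambda>k. c * (xs ! n) k + 0)] = map (\<lambda>x n. c * x n) (take (Suc n) xs) @ drop (Suc n) xs"
    unfolding L_def using nm lxs by (simp add: upd_app_drop[OF lL0] take_Suc_conv_app_nth)
  ultimately show ?case using Suc by (simp add: L_def)
qed

lemma T_homog:
  assumes hML: "multilinear_form m p T" and xs: "xs \<in> mdom m p"
  shows "T (map (\<lambda>x n. c * x n) xs) = c ^ m * T xs"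
  using T_homog_gen[OF hML xs, of m c] xs by (simp add: mdom_def)

definition FB :: "nat \<Rightarrow> ereal \<Rightarrow> ((nat \<Rightarrow> complex) list \<Rightarrow> complex) \<Rightarrow> real set" where
  "FB m p T = {norm (T xs) | xs. xs \<in> mdom m p \<and> (\<forall>j<m. seq_norm (fexp p j) (xs ! j) \<le> 1)}"

lemma T_bdd:
  assumes p: "p \<ge> 2" and m: "0 < m" and hML: "multilinear_form m p T" and hC: "continuous_form m p T"
  shows "bdd_above (FB m p T)"
proof -
  define Z where "Z = replicate m (\<lambda>n::nat. 0::complex)"
  have Zdom: "Z \<in> mdom m p" unfolding Z_def by (intro mdom_fs) auto
  have "Z[0 := (\<lambda>n. 0)] = Z" using m list_update_id[of Z 0] by (simp add: Z_def)
  then have TZ: "T Z = 0" using T_zero[OF hML Zdom m] by simp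
  obtain d where d: "d > 0" and dH: "\<And>ys. ys \<in> mdom m p \<Longrightarrow>
      (\<forall>j<m. seq_norm (fexp p j) (\<lambda>n. (ys ! j) n - (Z ! j) n) < d) \<Longrightarrow> norm (T ys - T Z) < 1"
    using hC Zdom unfolding continuous_form_def by (meson zero_less_one)
  show ?thesis
  proof (rule bdd_aboveI)
    fix y assume "y \<in> FB m p T"
    then obtain xs where y: "y = norm (T xs)" and xs: "xs \<in> mdom m p"
      and xb: "\<forall>j<m. seq_norm (fexp p j) (xs ! j) \<le> 1" unfolding FB_def by blast
    define c where "c = complex_of_real (d/2)"
    define ys where "ys = map (\<lambda>x n. c * x n) xs"
    have lxs: "length xs = m" using xs by (simp add: mdom_def)
    have ysdom: "ys \<in> mdom m p" using xs unfolding ys_def mdom_def by (auto intro: sc_space)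
    have "seq_norm (fexp p j) (\<lambda>n. (ys ! j) n - (Z ! j) n) < d" if j: "j < m" for j
    proof -
      have "(\<lambda>n. (ys ! j) n - (Z ! j) n) = (\<lambda>n. c * (xs ! j) n)" using j lxs by (simp add: ys_def Z_def)
      then have "seq_norm (fexp p j) (\<lambda>n. (ys ! j) n - (Z ! j) n) \<le> norm c * seq_norm (fexp p j) (xs ! j)"
        using seq_norm_scale_le[OF mdom_nth[OF xs j] fexp_ok[OF p]] by simp
      also have "\<dots> \<le> norm c * 1" using xb j by (intro mult_left_mono) auto
      also have "\<dots> < d" using d by (simp add: c_def)
      finally show ?thesis .
    qed
    then have "norm (T ys) < 1" using dH[OF ysdom] TZ by simp
    moreover have "T ys = c ^ m * T xs" unfolding ys_def by (rule T_homog[OF hML xs])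
    ultimately have "(d/2) ^ m * norm (T xs) < 1" using d by (simp add: c_def norm_mult norm_power)
    then have "norm (T xs) \<le> 1 / (d/2) ^ m" using d by (simp add: field_simps)
    then show "y \<le> 1 / (d/2) ^ m" using y by simp
  qed
qed

lemma FB_upper:
  assumes "bdd_above (FB m p T)" "xs \<in> mdom m p" "\<forall>j<m. seq_norm (fexp p j) (xs ! j) \<le> 1"
  shows "norm (T xs) \<le> form_norm m p T"
proof -
  have "norm (T xs) \<in> FB m p T" using assms unfolding FB_def by blast
  then show ?thesis using assms(1) unfolding form_norm_def FB_def[symmetric] by (rule cSup_upper)
qed

lemma form_norm_nonneg:
  assumes "bdd_above (FB m p T)"
  shows "0 \<le> form_norm m p T"
proof -
  define Z where "Z = replicate m (\<lambda>n::nat. 0::complex)"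
  have Zdom: "Z \<in> mdom m p" unfolding Z_def by (intro mdom_fs) auto
  have "norm (T Z) \<le> form_norm m p T"
    using FB_upper[OF assms Zdom] by (simp add: Z_def seq_norm_zero)
  then show ?thesis by (rule order.trans[OF norm_ge_zero])
qed



lemma conj_exp_ge1: "p \<ge> 2 \<Longrightarrow> 1 \<le> conj_exp p"
  by (cases p) (auto simp: conj_exp_def field_simps)

lemma seq_norm_inf_le1: "(\<And>n. norm (x n) \<le> 1) \<Longrightarrow> seq_norm \<infinity> x \<le> 1"
  unfolding seq_norm_def by (auto intro!: cSUP_least)

lemma dual_step:
  fixes y :: "nat \<Rightarrow> complex" and F q :: real
  assumes p: "p \<ge> 2" and q: "q = conj_exp p"
    and H: "\<And>x. seq_norm p (fvec N x) \<le> 1 \<Longrightarrow> norm (\<Sum>i<N. x i * y i) \<le> F"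
  shows "(\<Sum>i<N. norm (y i) powr q) \<le> F powr q"
proof -
  have q1: "1 \<le> q" using conj_exp_ge1[OF p] q by simp
  define Y where "Y = (\<Sum>i<N. norm (y i) powr q)"
  show ?thesis
  proof (cases "Y = 0")
    case True then show ?thesis by (simp add: Y_def[symmetric])
  next
    case False
    then have Yp: "0 < Y" unfolding Y_def by (metis sum_nonneg powr_ge_zero order_less_le)
    define e where "e = 1 - 1/q"
    define x where "x = (\<lambda>i. (if y i = 0 then 0 else cnj (y i) / norm (y i) * of_real (norm (y i) powr (q - 1)))
                           / of_real (Y powr e))"
    have xy: "x i * y i = of_real (norm (y i) powr q / Y powr e)" for i
    proof (cases "y i = 0")
      case True then show ?thesis using q1 by (simp add: x_def)
    next
      case False
      then have ny: "0 < norm (y i)" by simp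
      have "cnj (y i) * y i = of_real ((norm (y i))\<^sup>2)" using complex_norm_square[of "y i"] by (simp add: mult.commute)
      then have "x i * y i = of_real ((norm (y i))\<^sup>2 / norm (y i) * norm (y i) powr (q - 1) / Y powr e)"
        using False by (simp add: x_def field_simps)
      also have "(norm (y i))\<^sup>2 / norm (y i) * norm (y i) powr (q - 1) = norm (y i) powr 1 * norm (y i) powr (q - 1)"
        using ny by (simp add: power2_eq_square)
      also have "\<dots> = norm (y i) powr q"
      proof -
        have "norm (y i) powr q = norm (y i) powr (1 + (q - 1))" by simp
        also have "\<dots> = norm (y i) powr 1 * norm (y i) powr (q - 1)" by (rule powr_add)
        finally show ?thesis by simp
      qed
      finally show ?thesis .
    qed
    have "(\<Sum>i<N. x i * y i) = of_real (Y / Y powr e)"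
      unfolding xy Y_def by (simp add: sum_divide_distrib)
    also have "Y / Y powr e = Y powr (1/q)"
    proof -
      have "Y powr (1/q) = Y powr (1 - e)" by (simp add: e_def)
      also have "\<dots> = Y powr 1 / Y powr e" by (rule powr_diff)
      finally show ?thesis using Yp by simp
    qed
    finally have sxy: "(\<Sum>i<N. x i * y i) = of_real (Y powr (1/q))" .
    have nx: "norm (x i) = (if y i = 0 then 0 else norm (y i) powr (q - 1)) / Y powr e" for i
      by (simp add: x_def norm_divide norm_mult)
    have ball: "seq_norm p (fvec N x) \<le> 1"
    proof (cases p)
      case PInf
      then have "q = 1" using q by (simp add: conj_exp_def)
      then have "norm (x i) \<le> 1" for i using nx[of i] by (simp add: e_def)
      then have "norm (fvec N x n) \<le> 1" for n by (simp add: fvec_def)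
      then show ?thesis using PInf by (simp add: seq_norm_inf_le1)
    next
      case (real r)
      then have r2: "2 \<le> r" using p by simp
      have qr: "q = r / (r - 1)" using q real by (simp add: conj_exp_def)
      have iq: "1/q = (r - 1) / r" using qr r2 by simp
      have e1: "(q - 1) * r = q" "e * r = 1" using r2 qr iq by (simp_all add: e_def field_simps)
      have "norm (x i) powr r = norm (y i) powr q / Y" for i
      proof (cases "y i = 0")
        case True then show ?thesis using nx[of i] q1 r2 by simp
      next
        case False
        then have "norm (x i) powr r = (norm (y i) powr (q - 1) / Y powr e) powr r" using nx[of i] by simp
        also have "\<dots> = norm (y i) powr ((q - 1) * r) / Y powr (e * r)"
          by (simp add: powr_divide powr_powr)
        finally show ?thesis using e1 Yp by simp
      qed
      then have "(\<Sum>n. norm (fvec N x n) powr real_of_ereal p) = (\<Sum>n<N. norm (y n) powr q / Y)"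
        using real r2 by (subst suminf_finite[of "{..<N}"]) (auto simp: fvec_def)
      also have "\<dots> = 1" using Yp by (simp add: Y_def[symmetric] sum_divide_distrib[symmetric])
      finally show ?thesis using real by (simp add: seq_norm_def)
    next
      case MInf then show ?thesis using p by simp
    qed
    have "Y powr (1/q) \<le> F" using H[OF ball] sxy by simp
    then have "(Y powr (1/q)) powr q \<le> F powr q" using q1 by (intro powr_mono2) auto
    then show ?thesis using q1 by (simp add: powr_powr Y_def[symmetric])
  qed
qed



lemma idx_1: "idx k (Suc 0) = {replicate k 0}"
proof
  show "idx k (Suc 0) \<subseteq> {replicate k 0}"
  proof
    fix xs assume "xs \<in> idx k (Suc 0)"
    then have "length xs = k" "\<And>y. y \<in> set xs \<Longrightarrow> y = 0" by (auto simp: idx_def)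
    then have "xs = replicate k 0" by (intro replicate_eqI) auto
    then show "xs \<in> {replicate k 0}" by simp
  qed
qed (auto simp: idx_def)

definition Sset :: "nat \<Rightarrow> real \<Rightarrow> real set" where
  "Sset k q = {S. \<forall>N a. S * sqrt (\<Sum>is\<in>idx k N. (norm (a is))\<^sup>2) \<le> steinhaus_moment k q N a powr (1 / q)}"

lemma S_const_Sset: "S_const k q = Sup (Sset k q)"
  unfolding S_const_def Sset_def ..

lemma Sset_le1:
  assumes "S \<in> Sset k q" shows "S \<le> 1"
proof -
  interpret prob_space "steinhaus_space k (Suc 0)" by (rule prob_SP)
  have H: "\<And>N a. S * sqrt (\<Sum>is\<in>idx k N. (norm (a is))\<^sup>2) \<le> steinhaus_moment k q N a powr (1 / q)"
    using assms unfolding Sset_def by blast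
  have "S * sqrt (\<Sum>is\<in>idx k (Suc 0). (norm ((\<lambda>_. 1::complex) is))\<^sup>2)
        \<le> steinhaus_moment k q (Suc 0) (\<lambda>_. 1) powr (1 / q)"
    by (rule H)
  moreover have "steinhaus_moment k q (Suc 0) (\<lambda>_. 1) = 1"
    unfolding steinhaus_moment_def idx_1 by (simp add: prod_norm[symmetric] prob_space)
  ultimately show ?thesis unfolding idx_1 by simp
qed

lemma Sset_bdd: "bdd_above (Sset k q)"
  by (rule bdd_aboveI[where M=1]) (rule Sset_le1)

lemma Sset_c: "1 \<le> q \<Longrightarrow> 3 / (4 * sqrt (2 ^ k)) \<in> Sset k q"
  unfolding Sset_def using Khin by blast

lemma S_const_pos: "1 \<le> q \<Longrightarrow> 0 < S_const k q"
proof -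
  assume q: "1 \<le> q"
  have "3 / (4 * sqrt (2 ^ k)) \<le> S_const k q"
    unfolding S_const_Sset by (rule cSup_upper[OF Sset_c[OF q] Sset_bdd])
  moreover have "0 < 3 / (4 * sqrt (2 ^ k) :: real)" by simp
  ultimately show ?thesis by linarith
qed

lemma XX_powr_integrable:
  assumes q0: "0 \<le> q"
  shows "integrable (steinhaus_space k N) (\<lambda>t. norm (XX k N a t) powr q)"
proof -
  interpret prob_space "steinhaus_space k N" by (rule prob_SP)
  show ?thesis
  proof (rule integrable_const_bound[where B="(\<Sum>A\<in>idx k N. norm (a A)) powr q"])
    show "AE x in steinhaus_space k N. norm (norm (XX k N a x) powr q) \<le> (\<Sum>A\<in>idx k N. norm (a A)) powr q"
    proof (intro AE_I2)
      fix x
      have "norm (XX k N a x) powr q \<le> (\<Sum>A\<in>idx k N. norm (a A)) powr q"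
        using q0 by (auto intro!: powr_mono2 norm_XX_le)
      then show "norm (norm (XX k N a x) powr q) \<le> (\<Sum>A\<in>idx k N. norm (a A)) powr q" by simp
    qed
  qed measurable
qed



lemma expand_row:
  assumes hML: "multilinear_form (Suc k) p T"
  shows "T (map (fvec N) (x # map (\<lambda>j n. cis (2 * pi * t (j, n))) [0..<k]))
       = (\<Sum>i<N. x i * XX k N (\<lambda>r. T (unitv i # map unitv r)) t)"
proof -
  define cs where "cs = x # map (\<lambda>j n. cis (2 * pi * t (j, n))) [0..<k]"
  have lcs: "length cs = Suc k" by (simp add: cs_def)
  have "T (map (fvec N) cs) = (\<Sum>is\<in>idx (Suc k) N. (\<Prod>j<Suc k. (cs ! j) (is ! j)) * T (map unitv is))"
    by (rule T_expand[OF hML lcs])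
  also have "\<dots> = (\<Sum>P\<in>{..<N} \<times> idx k N. (\<Prod>j<Suc k. (cs ! j) ((fst P # snd P) ! j)) * T (map unitv (fst P # snd P)))"
    unfolding idx_cons by (subst sum.reindex[OF inj_cons]) (simp add: split_beta)
  also have "\<dots> = (\<Sum>i<N. \<Sum>r\<in>idx k N. x i * ((\<lambda>r. T (unitv i # map unitv r)) r * (\<Prod>j<k. cis (2 * pi * t (j, r ! j)))))"
    unfolding sum.cartesian_product
  proof (intro sum.cong refl)
    fix P assume P: "P \<in> {..<N} \<times> idx k N"
    obtain i r where Pe: "P = (i, r)" by (cases P)
    have "(\<Prod>j<Suc k. (cs ! j) ((i # r) ! j)) = x i * (\<Prod>j<k. cis (2 * pi * t (j, r ! j)))"
      unfolding prod.lessThan_Suc_shift by (simp add: cs_def)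
    then show "(\<Prod>j<Suc k. (cs ! j) ((fst P # snd P) ! j)) * T (map unitv (fst P # snd P)) =
        (case P of (i, r) \<Rightarrow> x i * ((\<lambda>r. T (unitv i # map unitv r)) r * (\<Prod>j<k. cis (2 * pi * t (j, r ! j)))))"
      by (simp add: Pe)
  qed
  also have "\<dots> = (\<Sum>i<N. x i * XX k N (\<lambda>r. T (unitv i # map unitv r)) t)"
    by (simp add: X_eq[symmetric] sum_distrib_left)
  finally show ?thesis by (simp add: cs_def)
qed

lemma row_ball:
  assumes "seq_norm p (fvec N x) \<le> 1"
  shows "\<forall>j<Suc k. seq_norm (fexp p j) ((map (fvec N) (x # map (\<lambda>j n. cis (2 * pi * t (j, n))) [0..<k])) ! j) \<le> 1"
proof (intro allI impI)
  fix j assume j: "j < Suc k"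
  show "seq_norm (fexp p j) ((map (fvec N) (x # map (\<lambda>j n. cis (2 * pi * t (j, n))) [0..<k])) ! j) \<le> 1"
  proof (cases j)
    case 0 then show ?thesis using assms by (simp add: fexp_def)
  next
    case (Suc j')
    then have j': "j' < k" using j by simp
    have "norm (fvec N (\<lambda>n. cis (2 * pi * t (j', n))) n) \<le> 1" for n by (simp add: fvec_def)
    then show ?thesis using Suc j' by (simp add: fexp_def seq_norm_inf_le1)
  qed
qed

theorem mainTheorem5:
  fixes p :: ereal and m :: nat and T :: "(nat \<Rightarrow> complex) list \<Rightarrow> complex"
  assumes "p \<ge> 2" and "m \<ge> 2"
    and "multilinear_form m p T" and "continuous_form m p T"
  shows "\<forall>N. (\<Sum>i1<N. (\<Sum>r\<in>idx (m - 1) N. (norm (T (unitv i1 # map unitv r)))\<^sup>2)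
                 powr (conj_exp p / 2)) powr (1 / conj_exp p)
            \<le> inverse (S_const (m - 1) (conj_exp p)) * form_norm m p T"
proof
  fix N
  define k where "k = m - 1"
  define q where "q = conj_exp p"
  define F where "F = form_norm m p T"
  have p: "p \<ge> 2" using assms by simp
  have mk: "m = Suc k" using assms by (simp add: k_def)
  have hML: "multilinear_form (Suc k) p T" using assms mk by simp
  have q1: "1 \<le> q" using conj_exp_ge1[OF p] by (simp add: q_def)
  have bdd: "bdd_above (FB m p T)" using T_bdd[OF p _ assms(3,4)] assms by simp
  have F0: "0 \<le> F" unfolding F_def by (rule form_norm_nonneg[OF bdd])
  define a where "a = (\<lambda>i r. T (unitv i # map unitv r))"
  define Y where "Y = (\<lambda>i t. XX k N (a i) t)"
  have key: "(\<Sum>i<N. norm (Y i t) powr q) \<le> F powr q" for t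
  proof (rule dual_step[OF p q_def])
    fix x assume x: "seq_norm p (fvec N x) \<le> 1"
    define xs where "xs = map (fvec N) (x # map (\<lambda>j n. cis (2 * pi * t (j, n))) [0..<k])"
    have xsdom: "xs \<in> mdom m p" unfolding xs_def mk by (intro mdom_fs) auto
    have xsb: "\<forall>j<m. seq_norm (fexp p j) (xs ! j) \<le> 1" unfolding xs_def mk by (rule row_ball[OF x])
    have "T xs = (\<Sum>i<N. x i * Y i t)" unfolding xs_def Y_def a_def by (rule expand_row[OF hML])
    then show "norm (\<Sum>i<N. x i * Y i t) \<le> F"
      using FB_upper[OF bdd xsdom xsb] by (simp add: F_def)
  qed
  define Sig where "Sig = (\<Sum>i<N. (\<Sum>r\<in>idx k N. (norm (a i r))\<^sup>2) powr (q / 2))"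
  define L where "L = Sig powr (1 / q)"
  have Sig0: "0 \<le> Sig" unfolding Sig_def by (simp add: sum_nonneg)
  have SL: "S * L \<le> F" if S: "S \<in> Sset k q" "0 < S" for S
  proof -
    interpret prob_space "steinhaus_space k N" by (rule prob_SP)
    have int: "integrable (steinhaus_space k N) (\<lambda>t. norm (Y i t) powr q)" for i
      unfolding Y_def using q1 by (intro XX_powr_integrable) simp
    have row: "S powr q * (\<Sum>r\<in>idx k N. (norm (a i r))\<^sup>2) powr (q / 2)
               \<le> (\<integral>t. norm (Y i t) powr q \<partial>steinhaus_space k N)" for i
    proof -
      define Mi where "Mi = (\<integral>t. norm (Y i t) powr q \<partial>steinhaus_space k N)"
      have Mi0: "0 \<le> Mi" unfolding Mi_def by simp
      have mom: "steinhaus_moment k q N (a i) = Mi"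
        unfolding steinhaus_moment_def X_eq Mi_def Y_def ..
      define R where "R = (\<Sum>r\<in>idx k N. (norm (a i r))\<^sup>2)"
      have R0: "0 \<le> R" unfolding R_def by (simp add: sum_nonneg)
      have "S * sqrt R \<le> Mi powr (1 / q)"
        using S(1) mom unfolding Sset_def R_def by auto
      then have "(S * sqrt R) powr q \<le> (Mi powr (1 / q)) powr q"
        using S q1 R0 by (intro powr_mono2) auto
      also have "\<dots> = Mi" using q1 Mi0 by (simp add: powr_powr)
      also have "(S * sqrt R) powr q = S powr q * R powr (q / 2)"
        using S R0 by (simp add: powr_mult powr_half_sqrt[symmetric] powr_powr)
      finally show ?thesis unfolding R_def Mi_def .
    qed
    have "S powr q * Sig \<le> (\<Sum>i<N. (\<integral>t. norm (Y i t) powr q \<partial>steinhaus_space k N))"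
      unfolding Sig_def sum_distrib_left by (intro sum_mono row)
    also have "\<dots> = (\<integral>t. (\<Sum>i<N. norm (Y i t) powr q) \<partial>steinhaus_space k N)"
      by (subst Bochner_Integration.integral_sum) (auto simp: int)
    also have "\<dots> \<le> (\<integral>t. F powr q \<partial>steinhaus_space k N)"
      by (intro integral_mono key) (auto intro: int)
    also have "\<dots> = F powr q" by (simp add: prob_space)
    finally have "S powr q * Sig \<le> F powr q" .
    then have "(S powr q * Sig) powr (1 / q) \<le> (F powr q) powr (1 / q)"
      using S q1 Sig0 by (intro powr_mono2) auto
    also have "(F powr q) powr (1 / q) = F" using F0 q1 by (simp add: powr_powr)
    also have "(S powr q * Sig) powr (1 / q) = S * L"
      using S q1 Sig0 by (simp add: L_def powr_mult powr_powr)
    finally show ?thesis .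
  qed
  have Spos: "0 < S_const k q" by (rule S_const_pos[OF q1])
  have L0: "0 \<le> L" unfolding L_def by simp
  have "L \<le> inverse (S_const k q) * F"
  proof (cases "L = 0")
    case True then show ?thesis using Spos F0 by simp
  next
    case False
    then have Lp: "0 < L" using L0 by simp
    have "S_const k q \<le> F / L"
      unfolding S_const_Sset
    proof (rule cSup_least)
      show "Sset k q \<noteq> {}" using Sset_c[OF q1] by blast
      fix S assume S: "S \<in> Sset k q"
      show "S \<le> F / L"
      proof (cases "0 < S")
        case True then show ?thesis using SL[OF S True] Lp by (simp add: field_simps)
      next
        case False then show ?thesis using F0 Lp by (smt (verit) divide_nonneg_pos)
      qed
    qed
    then show ?thesis using Spos Lp by (simp add: field_simps)
  qed
  then show "(\<Sum>i1<N. (\<Sum>r\<in>idx (m - 1) N. (norm (T (unitv i1 # map unitv r)))\<^sup>2)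
                 powr (conj_exp p / 2)) powr (1 / conj_exp p)
            \<le> inverse (S_const (m - 1) (conj_exp p)) * form_norm m p T"
    by (simp add: L_def Sig_def a_def k_def q_def F_def)
qed

end
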